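(* Let $n\geq 2$, $G=\mathbb{Z}_n\times\mathbb{Z}_n$, and $\beta$ a bicharacter of $G$. Let $A$ be a $G$-graded $\beta$-commutative algebra with $A_0=K$ such that, for an enumeration $g_1,\dots,g_k$ of the nonzero elements of $G$, there exist $a_j\in A_{g_j}$ with $a_1\cdots a_k\neq0$. Then $A$ is isomorphic, as a $G$-graded algebra, to a twisted group algebra $K^\alpha G$.
   Context: All algebras are associative with unit over an algebraically closed field $K$ of characteristic $0$. A bicharacter of an abelian group $G$ is a map $\beta\colon G\times G\to K^*$ with $\beta(g,h)=\beta(h,g)^{-1}$, multiplicative in each argument. A $G$-graded algebra $C$ is $\beta$-commutative if $c_gc_h=\beta(g,h)c_hc_g$ for all homogeneous $c_g\in C_g$, $c_h\in C_h$. For a 2-cocycle $\alpha\colon G\times G\to K^*$, the twisted group algebra $K^\alpha G$ has basis $\{X_g\}_{g\in G}$ with $X_gX_h=\alpha(g,h)X_{g+h}$ and grading $(K^\alpha G)_g=KX_g$. *)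

theory Defs
  imports Main "HOL-Computational_Algebra.Polynomial"
begin

definition alg_closed :: "'k::field itself \<Rightarrow> bool" where
  "alg_closed _ \<longleftrightarrow> (\<forall>p::'k poly. degree p > 0 \<longrightarrow> (\<exists>x. poly p x = 0))"

definition Zn2 :: "nat \<Rightarrow> (nat \<times> nat) set" where
  "Zn2 n = {0..<n} \<times> {0..<n}"

definition gadd :: "nat \<Rightarrow> nat \<times> nat \<Rightarrow> nat \<times> nat \<Rightarrow> nat \<times> nat" where
  "gadd n g h = ((fst g + fst h) mod n, (snd g + snd h) mod n)"

definition is_bicharacter :: "nat \<Rightarrow> (nat \<times> nat \<Rightarrow> nat \<times> nat \<Rightarrow> 'k::field) \<Rightarrow> bool" where
  "is_bicharacter n \<beta> \<longleftrightarrow>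
     (\<forall>g\<in>Zn2 n. \<forall>h\<in>Zn2 n. \<beta> g h \<noteq> 0 \<and> \<beta> g h = inverse (\<beta> h g)) \<and>
     (\<forall>g\<in>Zn2 n. \<forall>h\<in>Zn2 n. \<forall>k\<in>Zn2 n.
        \<beta> (gadd n g h) k = \<beta> g k * \<beta> h k \<and> \<beta> g (gadd n h k) = \<beta> g h * \<beta> g k)"

definition is_algebra :: "('k::field \<Rightarrow> 'a::ring_1 \<Rightarrow> 'a) \<Rightarrow> bool" where
  "is_algebra scale \<longleftrightarrow> vector_space scale \<and>
     (\<forall>c x y. scale c (x * y) = scale c x * y \<and> scale c (x * y) = x * scale c y)"

definition is_graded_algebra ::
  "('k::field \<Rightarrow> 'a::ring_1 \<Rightarrow> 'a) \<Rightarrow> nat \<Rightarrow> (nat \<times> nat \<Rightarrow> 'a set) \<Rightarrow> bool" where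
  "is_graded_algebra scale n A \<longleftrightarrow> is_algebra scale \<and>
     (\<forall>g\<in>Zn2 n. module.subspace scale (A g)) \<and>
     (\<forall>x. \<exists>!f. (\<forall>g\<in>Zn2 n. f g \<in> A g) \<and> (\<forall>g. g \<notin> Zn2 n \<longrightarrow> f g = 0) \<and>
              x = (\<Sum>g\<in>Zn2 n. f g)) \<and>
     (\<forall>g\<in>Zn2 n. \<forall>h\<in>Zn2 n. \<forall>x\<in>A g. \<forall>y\<in>A h. x * y \<in> A (gadd n g h))"

definition beta_commutative ::
  "('k::field \<Rightarrow> 'a::ring_1 \<Rightarrow> 'a) \<Rightarrow> nat \<Rightarrow> (nat \<times> nat \<Rightarrow> 'a set) \<Rightarrow>
   (nat \<times> nat \<Rightarrow> nat \<times> nat \<Rightarrow> 'k) \<Rightarrow> bool" where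
  "beta_commutative scale n A \<beta> \<longleftrightarrow>
     (\<forall>g\<in>Zn2 n. \<forall>h\<in>Zn2 n. \<forall>x\<in>A g. \<forall>y\<in>A h. x * y = scale (\<beta> g h) (y * x))"

definition is_2cocycle :: "nat \<Rightarrow> (nat \<times> nat \<Rightarrow> nat \<times> nat \<Rightarrow> 'k::field) \<Rightarrow> bool" where
  "is_2cocycle n \<alpha> \<longleftrightarrow>
     (\<forall>g\<in>Zn2 n. \<forall>h\<in>Zn2 n. \<alpha> g h \<noteq> 0) \<and>
     (\<forall>g\<in>Zn2 n. \<forall>h\<in>Zn2 n. \<forall>k\<in>Zn2 n.
        \<alpha> g h * \<alpha> (gadd n g h) k = \<alpha> h k * \<alpha> g (gadd n h k))"

text \<open>The twisted group algebra K^alpha G: elements are functions G -> K (zero outside G),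
  i.e. coordinate vectors w.r.t. the basis X_g; addition and scalar multiplication pointwise,
  multiplication determined by X_g X_h = alpha(g,h) X_(g+h).\<close>
definition tga_carrier :: "nat \<Rightarrow> (nat \<times> nat \<Rightarrow> 'k::field) set" where
  "tga_carrier n = {f. \<forall>x. x \<notin> Zn2 n \<longrightarrow> f x = 0}"

definition tga_X :: "nat \<times> nat \<Rightarrow> (nat \<times> nat \<Rightarrow> 'k::field)" where
  "tga_X g = (\<lambda>x. if x = g then 1 else 0)"

definition tga_mult :: "nat \<Rightarrow> (nat \<times> nat \<Rightarrow> nat \<times> nat \<Rightarrow> 'k::field) \<Rightarrow>
    (nat \<times> nat \<Rightarrow> 'k) \<Rightarrow> (nat \<times> nat \<Rightarrow> 'k) \<Rightarrow> (nat \<times> nat \<Rightarrow> 'k)" where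
  "tga_mult n \<alpha> f f' = (\<lambda>x. \<Sum>p\<in>{p \<in> Zn2 n \<times> Zn2 n. gadd n (fst p) (snd p) = x}.
                              \<alpha> (fst p) (snd p) * f (fst p) * f' (snd p))"

definition tga_one :: "(nat \<times> nat \<Rightarrow> nat \<times> nat \<Rightarrow> 'k::field) \<Rightarrow> (nat \<times> nat \<Rightarrow> 'k)" where
  "tga_one \<alpha> = (\<lambda>x. inverse (\<alpha> (0,0) (0,0)) * tga_X (0,0) x)"

definition graded_iso_tga ::
  "('k::field \<Rightarrow> 'a::ring_1 \<Rightarrow> 'a) \<Rightarrow> nat \<Rightarrow> (nat \<times> nat \<Rightarrow> 'a set) \<Rightarrow>
   (nat \<times> nat \<Rightarrow> nat \<times> nat \<Rightarrow> 'k) \<Rightarrow> ('a \<Rightarrow> (nat \<times> nat \<Rightarrow> 'k)) \<Rightarrow> bool" where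
  "graded_iso_tga scale n A \<alpha> \<phi> \<longleftrightarrow>
     bij_betw \<phi> UNIV (tga_carrier n) \<and>
     (\<forall>x y. \<phi> (x + y) = (\<lambda>z. \<phi> x z + \<phi> y z)) \<and>
     (\<forall>c x. \<phi> (scale c x) = (\<lambda>z. c * \<phi> x z)) \<and>
     (\<forall>x y. \<phi> (x * y) = tga_mult n \<alpha> (\<phi> x) (\<phi> y)) \<and>
     \<phi> 1 = tga_one \<alpha> \<and>
     (\<forall>g\<in>Zn2 n. \<phi> ` A g = {(\<lambda>z. c * tga_X g z) | c. True})"

end

theory Submission
  imports Defs
begin


lemma zero_in: "n > 0 \<Longrightarrow> (0,0) \<in> Zn2 n" by (simp add: Zn2_def)
lemma gadd_in: "n > 0 \<Longrightarrow> gadd n g h \<in> Zn2 n" by (simp add: Zn2_def gadd_def)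
lemma gadd_0: "g \<in> Zn2 n \<Longrightarrow> gadd n (0,0) g = g" by (cases g) (simp add: Zn2_def gadd_def)
lemma gadd_comm: "gadd n g h = gadd n h g" by (simp add: gadd_def add.commute)
lemma gadd_assoc: "gadd n (gadd n g h) k = gadd n g (gadd n h k)"
  by (simp add: gadd_def mod_add_left_eq mod_add_right_eq add.assoc)

lemma foldr_gadd: "foldr (gadd n) gs (0,0) = (sum_list (map fst gs) mod n, sum_list (map snd gs) mod n)"
  by (induction gs) (simp_all add: gadd_def mod_add_right_eq)

lemma sum_fst: "sum fst ({0..<n} \<times> {0..<(n::nat)}) = n * (\<Sum>a<n. a)"
proof -
  have "(\<Sum>a\<in>{0..<n}. \<Sum>b\<in>{0..<n}. a) = sum (case_prod (\<lambda>a b. a)) ({0..<n} \<times> {0..<n})"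
    by (rule sum.cartesian_product)
  moreover have "case_prod (\<lambda>a b. a) = (fst :: nat\<times>nat \<Rightarrow> nat)" by auto
  ultimately show ?thesis by (simp add: atLeast0LessThan sum_distrib_left)
qed

lemma sum_snd: "sum snd ({0..<n} \<times> {0..<(n::nat)}) = n * (\<Sum>a<n. a)"
proof -
  have "(\<Sum>a\<in>{0..<n}. \<Sum>b\<in>{0..<n}. b) = sum (case_prod (\<lambda>a b. b)) ({0..<n} \<times> {0..<n})"
    by (rule sum.cartesian_product)
  moreover have "case_prod (\<lambda>a b. b) = (snd :: nat\<times>nat \<Rightarrow> nat)" by auto
  ultimately show ?thesis by (simp add: atLeast0LessThan)
qed

lemma foldr_total:
  assumes "distinct gs" "set gs = Zn2 n - {(0,0)}"
  shows "foldr (gadd n) gs (0,0) = (0,0)"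
proof -
  have "sum_list (map fst gs) = sum fst (Zn2 n - {(0,0)})"
    using sum_list_distinct_conv_sum_set[OF assms(1)] assms(2) by simp
  also have "\<dots> = sum fst (Zn2 n)"
    by (rule sum.mono_neutral_left) (auto simp: Zn2_def)
  finally have f: "sum_list (map fst gs) = n * (\<Sum>a<n. a)" unfolding Zn2_def sum_fst .
  have "sum_list (map snd gs) = sum snd (Zn2 n - {(0,0)})"
    using sum_list_distinct_conv_sum_set[OF assms(1)] assms(2) by simp
  also have "\<dots> = sum snd (Zn2 n)"
    by (rule sum.mono_neutral_left) (auto simp: Zn2_def)
  finally have s: "sum_list (map snd gs) = n * (\<Sum>a<n. a)" unfolding Zn2_def sum_snd .
  show ?thesis by (simp add: foldr_gadd f s)
qed



locale GA =
  fixes scale :: "'k::field \<Rightarrow> 'a::ring_1 \<Rightarrow> 'a" and n :: nat and A :: "nat \<times> nat \<Rightarrow> 'a set"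
  assumes gr: "is_graded_algebra scale n A" and npos: "n > 0"
    and A0: "A (0,0) = range (\<lambda>c. scale c 1)"
begin

sublocale V: vector_space scale
  using gr by (simp add: is_graded_algebra_def is_algebra_def)

lemma alg1: "scale c x * y = scale c (x * y)"
  using gr by (simp add: is_graded_algebra_def is_algebra_def)
lemma alg2: "x * scale c y = scale c (x * y)"
  using gr unfolding is_graded_algebra_def is_algebra_def by metis
lemma sub: "g \<in> Zn2 n \<Longrightarrow> V.subspace (A g)"
  using gr by (simp add: is_graded_algebra_def)
lemma mulA: "g \<in> Zn2 n \<Longrightarrow> h \<in> Zn2 n \<Longrightarrow> x \<in> A g \<Longrightarrow> y \<in> A h \<Longrightarrow> x * y \<in> A (gadd n g h)"
  using gr by (simp add: is_graded_algebra_def)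

definition P :: "'a \<Rightarrow> (nat \<times> nat \<Rightarrow> 'a) \<Rightarrow> bool" where
  "P x f \<longleftrightarrow> (\<forall>g\<in>Zn2 n. f g \<in> A g) \<and> (\<forall>g. g \<notin> Zn2 n \<longrightarrow> f g = 0) \<and> x = (\<Sum>g\<in>Zn2 n. f g)"

lemma decomp: "\<exists>!f. P x f"
  using gr unfolding P_def is_graded_algebra_def by blast

lemma P_unique: "P x f \<Longrightarrow> P x f' \<Longrightarrow> f = f'"
  using decomp by blast

lemma finG: "finite (Zn2 n)" by (simp add: Zn2_def)

lemma single_P: "k \<in> Zn2 n \<Longrightarrow> x \<in> A k \<Longrightarrow> P x (\<lambda>g. if g = k then x else 0)"
  unfolding P_def using sub V.subspace_0 by (auto simp: finG)

lemma disj: "g \<in> Zn2 n \<Longrightarrow> h \<in> Zn2 n \<Longrightarrow> g \<noteq> h \<Longrightarrow> x \<in> A g \<Longrightarrow> x \<in> A h \<Longrightarrow> x = 0"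
  using P_unique[OF single_P[of g x] single_P[of h x]] by (metis (full_types))

lemma one_A0: "(1::'a) \<in> A (0,0)"
  using A0 by (metis V.scale_one rangeI)

end



context GA begin

lemma foldr_in: "foldr (gadd n) gs (0,0) \<in> Zn2 n"
  by (cases gs) (auto simp: zero_in gadd_in npos)

lemma prod_deg:
  "length as = length gs \<Longrightarrow> set gs \<subseteq> Zn2 n \<Longrightarrow> (\<forall>j<length gs. as!j \<in> A (gs!j)) \<Longrightarrow>
   prod_list as \<in> A (foldr (gadd n) gs (0,0))"
proof (induction gs arbitrary: as)
  case Nil
  then show ?case using one_A0 by simp
next
  case (Cons g gs)
  then obtain a as' where as: "as = a # as'" by (cases as) auto
  have a: "a \<in> A g" using Cons.prems as by force
  have "prod_list as' \<in> A (foldr (gadd n) gs (0,0))"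
    using Cons.prems as by (intro Cons.IH) force+
  then show ?case using mulA[OF _ foldr_in a] Cons.prems as by simp
qed

lemma one_nz:
  assumes "prod_list (as::'a list) \<noteq> 0" shows "(1::'a) \<noteq> 0"
proof
  assume h: "(1::'a) = 0"
  have "prod_list as = prod_list as * 1" by simp
  also have "\<dots> = 0" using h by simp
  finally show False using assms by simp
qed

lemma inv_elem:
  assumes bc: "is_bicharacter n \<beta>" and comm: "beta_commutative scale n A \<beta>"
    and gs: "distinct gs" "set gs = Zn2 n - {(0,0)}" "length as = length gs"
      "\<forall>j<length gs. as!j \<in> A (gs!j)" "prod_list as \<noteq> 0"
    and j: "j < length gs"
  shows "\<exists>v e. e \<in> Zn2 n \<and> v \<in> A e \<and> as!j * v = 1 \<and> v * as!j = 1"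
proof -
  define a where "a = as ! j"
  define g where "g = gs ! j"
  define L where "L = prod_list (take j as)"
  define R where "R = prod_list (drop (Suc j) as)"
  define dL where "dL = foldr (gadd n) (take j gs) (0,0)"
  define dR where "dR = foldr (gadd n) (drop (Suc j) gs) (0,0)"
  have gG: "g \<in> Zn2 n" using gs j unfolding g_def by (metis DiffD1 nth_mem)
  have aA: "a \<in> A g" using gs j a_def g_def by simp
  have setG: "set gs \<subseteq> Zn2 n" using gs by auto
  have LA: "L \<in> A dL" unfolding L_def dL_def
    using gs setG by (intro prod_deg) (auto dest: in_set_takeD)
  have RA: "R \<in> A dR" unfolding R_def dR_def
    using gs setG j by (intro prod_deg) (auto dest: in_set_dropD)
  have dLG: "dL \<in> Zn2 n" and dRG: "dR \<in> Zn2 n" unfolding dL_def dR_def by (rule foldr_in)+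
  have Pd: "prod_list as = L * (a * R)"
    unfolding L_def R_def a_def using id_take_nth_drop[OF j[folded gs(3)]]
    by (metis mult.assoc prod_list.Cons prod_list.append)
  have "prod_list as \<in> A (0,0)"
    using prod_deg[OF gs(3) setG gs(4)] foldr_total[OF gs(1,2)] by simp
  then obtain c where c: "prod_list as = scale c 1" using A0 by auto
  have cnz: "c \<noteq> 0" using c gs(5) by auto
  have bnz: "\<And>x y. x \<in> Zn2 n \<Longrightarrow> y \<in> Zn2 n \<Longrightarrow> \<beta> x y \<noteq> 0"
    using bc unfolding is_bicharacter_def by blast
  have b1: "\<beta> dL g \<noteq> 0" and b2: "\<beta> g dR \<noteq> 0"
    using bnz dLG dRG gG by auto
  have La: "L * a = scale (\<beta> dL g) (a * L)" using comm LA aA dLG gG unfolding beta_commutative_def by blast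
  have aR: "a * R = scale (\<beta> g dR) (R * a)" using comm RA aA dRG gG unfolding beta_commutative_def by blast
  have "scale c 1 = scale (\<beta> dL g) (a * (L * R))"
    using Pd c La by (simp add: mult.assoc[symmetric] alg1)
  hence e1: "a * (L * R) = scale (inverse (\<beta> dL g) * c) 1"
    using b1 by (metis V.scale_scale V.scale_one left_inverse)
  have "scale c 1 = scale (\<beta> g dR) ((L * R) * a)"
    using Pd c aR by (simp add: mult.assoc alg2)
  hence e2: "(L * R) * a = scale (inverse (\<beta> g dR) * c) 1"
    using b2 by (metis V.scale_scale V.scale_one left_inverse)
  define v where "v = scale (inverse (inverse (\<beta> dL g) * c)) (L * R)"
  define w where "w = scale (inverse (inverse (\<beta> g dR) * c)) (L * R)"
  have k1: "inverse (inverse (\<beta> dL g) * c) * (inverse (\<beta> dL g) * c) = 1"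
    using b1 cnz by (intro left_inverse) simp
  have k2: "inverse (inverse (\<beta> g dR) * c) * (inverse (\<beta> g dR) * c) = 1"
    using b2 cnz by (intro left_inverse) simp
  have av: "a * v = 1" unfolding v_def alg2 e1 V.scale_scale k1 by simp
  have wa: "w * a = 1" unfolding w_def alg1 e2 V.scale_scale k2 by simp
  have "w = v" by (metis av wa mult.assoc mult_1_left mult_1_right)
  hence va: "v * a = 1" using wa by simp
  have "v \<in> A (gadd n dL dR)" unfolding v_def
    using sub[OF gadd_in[OF npos]] mulA[OF dLG dRG LA RA] V.subspace_scale by blast
  then show ?thesis using av va a_def gadd_in[OF npos] by blast
qed

lemma inv_range:
  assumes one: "(1::'a) \<noteq> 0" and gG: "g \<in> Zn2 n" and eG: "e \<in> Zn2 n"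
    and u: "u \<in> A g" and v: "v \<in> A e" and uv: "u * v = 1" and vu: "v * u = 1"
  shows "A g = range (\<lambda>c. scale c u)"
proof
  have "u * v \<in> A (gadd n g e)" using mulA gG eG u v by blast
  have ge: "gadd n g e = (0,0)"
  proof (rule ccontr)
    assume "gadd n g e \<noteq> (0,0)"
    have uv0: "u * v \<in> A (0,0)" using uv one_A0 by simp
    have "u * v = 0" by (rule disj[OF gadd_in[OF npos] zero_in[OF npos] \<open>gadd n g e \<noteq> (0,0)\<close> \<open>u * v \<in> A (gadd n g e)\<close> uv0])
    hence "(1::'a) = 0" using uv by simp
    with one show False by simp
  qed
  show "A g \<subseteq> range (\<lambda>c. scale c u)"
  proof
    fix x assume x: "x \<in> A g"
    have "v * x \<in> A (gadd n e g)" using mulA eG gG v x by blast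
    hence "v * x \<in> A (0,0)" using ge gadd_comm by metis
    then obtain c where "v * x = scale c 1" using A0 by auto
    hence "x = scale c u"
      by (metis alg2 mult.assoc mult_1_left mult_1_right uv)
    thus "x \<in> range (\<lambda>c. scale c u)" by blast
  qed
  show "range (\<lambda>c. scale c u) \<subseteq> A g"
    using sub[OF gG] u V.subspace_scale by blast
qed

end


locale GB = GA scale n A
  for scale :: "'k::field \<Rightarrow> 'a::ring_1 \<Rightarrow> 'a" and n A +
  fixes U :: "nat \<times> nat \<Rightarrow> 'a"
  assumes one: "(1::'a) \<noteq> 0"
    and UA: "g \<in> Zn2 n \<Longrightarrow> U g \<in> A g"
    and Uinv: "g \<in> Zn2 n \<Longrightarrow> \<exists>v. U g * v = 1 \<and> v * U g = 1"
    and Urange: "g \<in> Zn2 n \<Longrightarrow> A g = range (\<lambda>c. scale c (U g))"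
    and U0: "U (0,0) = 1"
begin

lemma U_nz: "g \<in> Zn2 n \<Longrightarrow> U g \<noteq> 0"
  using Uinv one by (metis mult_zero_left)

definition Q :: "'a \<Rightarrow> (nat \<times> nat \<Rightarrow> 'k) \<Rightarrow> bool" where
  "Q x f \<longleftrightarrow> (\<forall>g. g \<notin> Zn2 n \<longrightarrow> f g = 0) \<and> x = (\<Sum>g\<in>Zn2 n. scale (f g) (U g))"

lemma Q_ex: "\<exists>f. Q x f"
proof -
  obtain F where F: "P x F" using decomp by blast
  have ex: "\<exists>c. F g = scale c (U g)" if "g \<in> Zn2 n" for g
    using F that Urange unfolding P_def by blast
  define f where "f g = (if g \<in> Zn2 n then (SOME c. F g = scale c (U g)) else 0)" for g
  have "F g = scale (f g) (U g)" if "g \<in> Zn2 n" for g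
    using someI_ex[OF ex[OF that]] that unfolding f_def by simp
  hence "x = (\<Sum>g\<in>Zn2 n. scale (f g) (U g))" using F unfolding P_def by simp
  show ?thesis apply (rule exI[of _ f]) unfolding Q_def using \<open>x = _\<close> by (auto simp: f_def)
qed

lemma Q_uniq: assumes "Q x f" "Q x f'" shows "f = f'"
proof -
  have p1: "P x (\<lambda>g. if g \<in> Zn2 n then scale (f g) (U g) else 0)"
    using assms(1) UA sub V.subspace_scale unfolding P_def Q_def by auto
  have p2: "P x (\<lambda>g. if g \<in> Zn2 n then scale (f' g) (U g) else 0)"
    using assms(2) UA sub V.subspace_scale unfolding P_def Q_def by auto
  have e: "(\<lambda>g. if g \<in> Zn2 n then scale (f g) (U g) else 0) = (\<lambda>g. if g \<in> Zn2 n then scale (f' g) (U g) else 0)"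
    by (rule P_unique[OF p1 p2])
  show ?thesis
  proof
    fix g show "f g = f' g"
    proof (cases "g \<in> Zn2 n")
      case True
      then have "scale (f g) (U g) = scale (f' g) (U g)" using fun_cong[OF e, of g] by simp
      then show ?thesis using U_nz[OF True] by simp
    next
      case False
      from assms have "f g = 0" "f' g = 0" using False unfolding Q_def by blast+
      then show ?thesis by simp
    qed
  qed
qed

definition coef :: "'a \<Rightarrow> nat \<times> nat \<Rightarrow> 'k" where "coef x = (SOME f. Q x f)"

lemma coef_Q: "Q x (coef x)" unfolding coef_def using Q_ex someI_ex by metis
lemma coef_eq: "Q x f \<Longrightarrow> coef x = f" using coef_Q Q_uniq by blast
lemma coef_out: "g \<notin> Zn2 n \<Longrightarrow> coef x g = 0" using coef_Q unfolding Q_def by blast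
lemma expand: "x = (\<Sum>g\<in>Zn2 n. scale (coef x g) (U g))" using coef_Q unfolding Q_def by blast

lemma coef_single: "k \<in> Zn2 n \<Longrightarrow> coef (scale c (U k)) = (\<lambda>z. if z = k then c else 0)"
proof (intro coef_eq, unfold Q_def, safe)
  assume k: "k \<in> Zn2 n"
  have "(\<Sum>g\<in>Zn2 n. scale (if g = k then c else 0) (U g)) = (\<Sum>g\<in>Zn2 n. if g = k then scale c (U k) else 0)"
    by (intro sum.cong) auto
  also have "\<dots> = scale c (U k)" using k finG by simp
  finally show "scale c (U k) = (\<Sum>g\<in>Zn2 n. scale (if g = k then c else 0) (U g))" by simp
qed auto

lemma coef_zero: "coef 0 = (\<lambda>z. 0)"
  using coef_single[OF zero_in[OF npos], of 0] by simp

lemma coef_add: "coef (x + y) = (\<lambda>z. coef x z + coef y z)"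
proof (intro coef_eq, unfold Q_def, safe)
  show "coef x g + coef y g = 0" if "g \<notin> Zn2 n" for g using coef_out that by simp
  have "x + y = (\<Sum>g\<in>Zn2 n. scale (coef x g) (U g)) + (\<Sum>g\<in>Zn2 n. scale (coef y g) (U g))"
    using expand by metis
  also have "\<dots> = (\<Sum>g\<in>Zn2 n. scale (coef x g + coef y g) (U g))"
    by (simp add: sum.distrib[symmetric] V.scale_left_distrib)
  finally show "x + y = (\<Sum>g\<in>Zn2 n. scale (coef x g + coef y g) (U g))" .
qed

lemma coef_sum: "finite I \<Longrightarrow> coef (\<Sum>i\<in>I. f i) = (\<lambda>z. \<Sum>i\<in>I. coef (f i) z)"
  by (induction I rule: finite_induct) (simp_all add: coef_zero coef_add)

lemma coef_scale: "coef (scale c x) = (\<lambda>z. c * coef x z)"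
proof (intro coef_eq, unfold Q_def, safe)
  show "c * coef x g = 0" if "g \<notin> Zn2 n" for g using coef_out that by simp
  have "scale c x = scale c (\<Sum>g\<in>Zn2 n. scale (coef x g) (U g))"
    using expand by metis
  also have "\<dots> = (\<Sum>g\<in>Zn2 n. scale (c * coef x g) (U g))"
    by (simp add: V.scale_sum_right)
  finally show "scale c x = (\<Sum>g\<in>Zn2 n. scale (c * coef x g) (U g))" .
qed

definition \<alpha> :: "nat \<times> nat \<Rightarrow> nat \<times> nat \<Rightarrow> 'k" where
  "\<alpha> g h = coef (U g * U h) (gadd n g h)"

lemma Uprod: assumes "g \<in> Zn2 n" "h \<in> Zn2 n"
  shows "U g * U h = scale (\<alpha> g h) (U (gadd n g h))"
proof -
  have G: "gadd n g h \<in> Zn2 n" using gadd_in npos by blast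
  have "U g * U h \<in> A (gadd n g h)" using mulA assms UA by blast
  then obtain c where c: "U g * U h = scale c (U (gadd n g h))" using Urange[OF G] by auto
  have "\<alpha> g h = c" unfolding \<alpha>_def c coef_single[OF G] by simp
  then show ?thesis using c by simp
qed

lemma cocycle: "is_2cocycle n \<alpha>"
  unfolding is_2cocycle_def
proof safe
  fix a b c d assume g: "(a,b) \<in> Zn2 n" and h: "(c,d) \<in> Zn2 n" and z: "\<alpha> (a,b) (c,d) = 0"
  obtain v where v: "U (a,b) * v = 1" "v * U (a,b) = 1" using Uinv g by blast
  obtain w where w: "U (c,d) * w = 1" "w * U (c,d) = 1" using Uinv h by blast
  have "w * (v * (U (a,b) * U (c,d))) = 1" by (metis mult.assoc v(2) w(2) mult_1_left)
  moreover have "U (a,b) * U (c,d) = 0" using Uprod[OF g h] z by simp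
  ultimately show False using one by simp
next
  fix g h k assume g: "g \<in> Zn2 n" and h: "h \<in> Zn2 n" and k: "k \<in> Zn2 n"
  have G: "\<And>x y. gadd n x y \<in> Zn2 n" using gadd_in npos by blast
  have e1: "(U g * U h) * U k = scale (\<alpha> g h * \<alpha> (gadd n g h) k) (U (gadd n (gadd n g h) k))"
    by (simp add: Uprod g h k G alg1)
  have e2: "U g * (U h * U k) = scale (\<alpha> h k * \<alpha> g (gadd n h k)) (U (gadd n g (gadd n h k)))"
    by (simp add: Uprod g h k G alg2 mult.commute)
  have eq: "scale (\<alpha> g h * \<alpha> (gadd n g h) k) (U (gadd n g (gadd n h k)))
      = scale (\<alpha> h k * \<alpha> g (gadd n h k)) (U (gadd n g (gadd n h k)))"
    using e1 e2 unfolding gadd_assoc by (metis mult.assoc)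
  then show "\<alpha> g h * \<alpha> (gadd n g h) k = \<alpha> h k * \<alpha> g (gadd n h k)"
    using eq U_nz[OF G[of g "gadd n h k"]] V.scale_cancel_right by blast
qed

lemma coef_mult: "coef (x * y) = tga_mult n \<alpha> (coef x) (coef y)"
proof -
  let ?G = "Zn2 n"
  have G: "\<And>x y. gadd n x y \<in> ?G" using gadd_in npos by blast
  have "x * y = (\<Sum>g\<in>?G. scale (coef x g) (U g)) * (\<Sum>h\<in>?G. scale (coef y h) (U h))"
    using expand by metis
  also have "\<dots> = (\<Sum>g\<in>?G. \<Sum>h\<in>?G. scale (coef x g) (U g) * scale (coef y h) (U h))"
    by (simp add: sum_product)
  also have "\<dots> = (\<Sum>g\<in>?G. \<Sum>h\<in>?G. scale (coef x g * (coef y h * \<alpha> g h)) (U (gadd n g h)))"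
    by (intro sum.cong refl) (simp add: alg1 alg2 Uprod)
  finally have xy: "x * y = \<dots>" .
  show ?thesis
  proof
    fix z
    have "coef (x * y) z = (\<Sum>g\<in>?G. \<Sum>h\<in>?G. if gadd n g h = z then coef x g * (coef y h * \<alpha> g h) else 0)"
      unfolding xy by (simp add: coef_sum finG coef_single G eq_commute)
    also have "\<dots> = (\<Sum>p\<in>?G \<times> ?G. if gadd n (fst p) (snd p) = z then \<alpha> (fst p) (snd p) * coef x (fst p) * coef y (snd p) else 0)"
      unfolding sum.cartesian_product by (intro sum.cong) (auto simp: ac_simps)
    also have "\<dots> = tga_mult n \<alpha> (coef x) (coef y) z"
      unfolding tga_mult_def by (simp add: sum.inter_filter finG)
    finally show "coef (x * y) z = tga_mult n \<alpha> (coef x) (coef y) z" .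
  qed
qed

lemma result: "\<exists>\<alpha> \<phi>. is_2cocycle n \<alpha> \<and> graded_iso_tga scale n A \<alpha> \<phi>"
proof (intro exI conjI)
  show "is_2cocycle n \<alpha>" by (rule cocycle)
  have z: "(0,0) \<in> Zn2 n" using zero_in npos by blast
  have c1: "coef 1 = tga_X (0,0)"
    using coef_single[OF z, of 1] U0 by (auto simp: tga_X_def)
  have a00: "\<alpha> (0,0) (0,0) = 1"
    unfolding \<alpha>_def U0 using c1 by (simp add: gadd_def tga_X_def)
  have bij: "bij_betw coef UNIV (tga_carrier n)"
    unfolding bij_betw_def
  proof
    show "inj coef" by (rule injI) (metis expand)
    show "range coef = tga_carrier n"
    proof
      show "range coef \<subseteq> tga_carrier n" using coef_out by (auto simp: tga_carrier_def)
      show "tga_carrier n \<subseteq> range coef"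
      proof
        fix f :: "nat \<times> nat \<Rightarrow> 'k" assume "f \<in> tga_carrier n"
        hence "Q (\<Sum>g\<in>Zn2 n. scale (f g) (U g)) f" unfolding Q_def tga_carrier_def by auto
        thus "f \<in> range coef" using coef_eq by (metis rangeI)
      qed
    qed
  qed
  have img: "coef ` A g = {(\<lambda>z. c * tga_X g z) | c. True}" if g: "g \<in> Zn2 n" for g
  proof -
    have "\<And>c. coef (scale c (U g)) = (\<lambda>z. c * tga_X g z)"
      using coef_single[OF g] by (auto simp: tga_X_def)
    then have "coef ` range (\<lambda>c. scale c (U g)) = range (\<lambda>c. (\<lambda>z. c * tga_X g z))"
      by (simp add: image_image)
    then show ?thesis unfolding Urange[OF g] by auto
  qed
  show "graded_iso_tga scale n A \<alpha> coef"
    unfolding graded_iso_tga_def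
  proof (intro conjI allI ballI)
    show "coef 1 = tga_one \<alpha>" unfolding tga_one_def a00 c1 by simp
  qed (use bij coef_add coef_scale coef_mult img in blast)+
qed

end

theorem corollary4p3:
  fixes scale :: "'k::field_char_0 \<Rightarrow> 'a::ring_1 \<Rightarrow> 'a"
    and n :: nat
    and \<beta> :: "nat \<times> nat \<Rightarrow> nat \<times> nat \<Rightarrow> 'k"
    and A :: "nat \<times> nat \<Rightarrow> 'a set"
  assumes "alg_closed TYPE('k)"
    and "n \<ge> 2"
    and "is_bicharacter n \<beta>"
    and "is_graded_algebra scale n A"
    and "beta_commutative scale n A \<beta>"
    and "A (0,0) = range (\<lambda>c. scale c 1)"
    and "\<exists>gs as. distinct gs \<and> set gs = Zn2 n - {(0,0)} \<and> length as = length gs \<and>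
            (\<forall>j < length gs. as ! j \<in> A (gs ! j)) \<and> prod_list as \<noteq> 0"
  shows "\<exists>\<alpha> \<phi>. is_2cocycle n \<alpha> \<and> graded_iso_tga scale n A \<alpha> \<phi>"
proof -
  obtain gs as where gs: "distinct gs" "set gs = Zn2 n - {(0,0)}" "length as = length gs"
      "\<forall>j < length gs. as ! j \<in> A (gs ! j)" "prod_list as \<noteq> 0"
    using assms(7) by blast
  have GA: "GA scale n A" unfolding GA_def using assms(2,4,6) by auto
  interpret GA scale n A by (rule GA)
  have one: "(1::'a) \<noteq> 0" using one_nz gs(5) by blast
  define U where "U g = (if g = (0,0) then 1 else as ! (SOME j. j < length gs \<and> gs ! j = g))" for g
  have Uprop: "U g \<in> A g \<and> (\<exists>v. U g * v = 1 \<and> v * U g = 1) \<and> A g = range (\<lambda>c. scale c (U g))"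
    if g: "g \<in> Zn2 n" for g
  proof (cases "g = (0,0)")
    case True
    then show ?thesis using one_A0 assms(6) unfolding U_def by auto
  next
    case False
    then have "g \<in> set gs" using g gs(2) by auto
    then have ex: "\<exists>j. j < length gs \<and> gs ! j = g" by (simp add: in_set_conv_nth)
    define j where "j = (SOME j. j < length gs \<and> gs ! j = g)"
    have j: "j < length gs" "gs ! j = g" using someI_ex[OF ex] unfolding j_def by auto
    have Uj: "U g = as ! j" unfolding U_def j_def using False by simp
    have uA: "U g \<in> A g" using Uj j gs(4) by auto
    obtain v e where ve: "e \<in> Zn2 n" "v \<in> A e" "as ! j * v = 1" "v * as ! j = 1"
      using inv_elem[OF assms(3) assms(5) gs j(1)] by blast
    have "A g = range (\<lambda>c. scale c (U g))"
      using inv_range[OF one g ve(1) uA ve(2)] ve Uj by simp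
    then show ?thesis using uA ve Uj by auto
  qed
  have "GB_axioms scale n A U"
  proof (rule GB_axioms.intro)
    show "U (0,0) = 1" by (simp add: U_def)
  qed (use one Uprop in blast)+
  then have "GB scale n A U" by (rule GB.intro[OF GA])
  then show ?thesis by (rule GB.result)
qed

end
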